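(* Let $G$ be a finite simple graph with an initial configuration $c_0:V(G)\to\mathbb{Z}$ and let $(c_t)_{t\ge0}$ be the configurations of the diffusion process. If a vertex $v$ is unbounded, then there exists $u\in N(v)$ that is also unbounded.
   Context: Diffusion process: $c_{t+1}(u)=c_t(u)-|\{w\in N(u): c_t(u)>c_t(w)\}|+|\{w\in N(u): c_t(u)<c_t(w)\}|$ for all $u$ simultaneously. A vertex $v$ is bounded if there exist integers $m\le M$ with $m\le c_t(v)\le M$ for all $t\ge0$, and unbounded otherwise. *)

theory Defs
  imports Main
begin

definition simple_graph :: "'a set \<Rightarrow> ('a \<Rightarrow> 'a \<Rightarrow> bool) \<Rightarrow> bool" where
  "simple_graph V E \<longleftrightarrow> finite V \<and> (\<forall>u v. E u v \<longrightarrow> u \<in> V \<and> v \<in> V)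
     \<and> (\<forall>u v. E u v \<longrightarrow> E v u) \<and> (\<forall>u. \<not> E u u)"

definition nbhd :: "'a set \<Rightarrow> ('a \<Rightarrow> 'a \<Rightarrow> bool) \<Rightarrow> 'a \<Rightarrow> 'a set" where
  "nbhd V E u = {w \<in> V. E u w}"

definition diffusion_step :: "'a set \<Rightarrow> ('a \<Rightarrow> 'a \<Rightarrow> bool) \<Rightarrow> ('a \<Rightarrow> int) \<Rightarrow> ('a \<Rightarrow> int)" where
  "diffusion_step V E c = (\<lambda>u. c u
      - int (card {w \<in> nbhd V E u. c u > c w})
      + int (card {w \<in> nbhd V E u. c u < c w}))"

fun diffusion :: "'a set \<Rightarrow> ('a \<Rightarrow> 'a \<Rightarrow> bool) \<Rightarrow> ('a \<Rightarrow> int) \<Rightarrow> nat \<Rightarrow> ('a \<Rightarrow> int)" where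
  "diffusion V E c0 0 = c0"
| "diffusion V E c0 (Suc t) = diffusion_step V E (diffusion V E c0 t)"

definition bounded_vertex :: "'a set \<Rightarrow> ('a \<Rightarrow> 'a \<Rightarrow> bool) \<Rightarrow> ('a \<Rightarrow> int) \<Rightarrow> 'a \<Rightarrow> bool" where
  "bounded_vertex V E c0 v \<longleftrightarrow>
     (\<exists>m M::int. m \<le> M \<and> (\<forall>t. m \<le> diffusion V E c0 t v \<and> diffusion V E c0 t v \<le> M))"

end

theory Submission
  imports Defs
begin

lemma uniform_bound:
  assumes "finite N" "\<forall>u\<in>N. \<exists>B::int. \<forall>t. \<bar>f t u\<bar> \<le> B"
  shows "\<exists>B::int. \<forall>u\<in>N. \<forall>t. \<bar>f t u\<bar> \<le> B"
  using assms
proof (induction N rule: finite_induct)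
  case empty then show ?case by auto
next
  case (insert x F)
  then obtain B1 where b1: "\<forall>u\<in>F. \<forall>t. \<bar>f t u\<bar> \<le> B1" by auto
  from insert obtain B2 where b2: "\<forall>t. \<bar>f t x\<bar> \<le> B2" by auto
  show ?case
  proof (rule exI[of _ "max B1 B2"], intro ballI allI)
    fix u t assume "u \<in> insert x F"
    then show "\<bar>f t u\<bar> \<le> max B1 B2" using b1 b2 by (auto intro: max.coboundedI1 max.coboundedI2)
  qed
qed

theorem lemma5:
  assumes "simple_graph V E"
    and "v \<in> V"
    and "\<not> bounded_vertex V E c0 v"
  shows "\<exists>u \<in> nbhd V E v. \<not> bounded_vertex V E c0 u"
proof (rule ccontr)
  assume "\<not> ?thesis"
  hence nb: "\<forall>u\<in>nbhd V E v. bounded_vertex V E c0 u" by auto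
  let ?N = "nbhd V E v"
  let ?c = "diffusion V E c0"
  have fin: "finite ?N" using assms(1) unfolding simple_graph_def nbhd_def by auto
  have "\<forall>u\<in>?N. \<exists>B::int. \<forall>t. \<bar>?c t u\<bar> \<le> B"
  proof
    fix u assume "u \<in> ?N"
    with nb obtain m M where "\<forall>t. m \<le> ?c t u \<and> ?c t u \<le> M"
      unfolding bounded_vertex_def by auto
    then show "\<exists>B::int. \<forall>t. \<bar>?c t u\<bar> \<le> B"
      by (intro exI[of _ "max \<bar>m\<bar> \<bar>M\<bar>"]) (smt (verit))
  qed
  from uniform_bound[OF fin this] obtain B where
    B: "\<forall>u\<in>?N. \<forall>t. \<bar>?c t u\<bar> \<le> B" by blast
  define d where "d = int (card ?N)"
  have step: "?c (Suc t) v = ?c t v - int (card {w \<in> ?N. ?c t v > ?c t w})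
      + int (card {w \<in> ?N. ?c t v < ?c t w})" for t
    by (simp add: diffusion_step_def)
  have cL: "card {w \<in> ?N. ?c t v < ?c t w} \<le> card ?N" for t
    by (rule card_mono[OF fin]) auto
  have cA: "card {w \<in> ?N. ?c t v > ?c t w} \<le> card ?N" for t
    by (rule card_mono[OF fin]) auto
  have up: "?c t v \<le> max (c0 v) (B + d)" for t
  proof (induction t)
    case 0 then show ?case by simp
  next
    case (Suc t)
    show ?case
    proof (cases "?c t v > B")
      case True
      have "{w \<in> ?N. ?c t v < ?c t w} = {}"
        using B True by (auto simp: abs_le_iff) (smt (verit))
      hence "card {w \<in> ?N. ?c t v < ?c t w} = 0" by (simp only: card.empty)
      then show ?thesis using step[of t] Suc by linarith
    next
      case False
      then show ?thesis using step[of t] cL[of t] unfolding d_def by linarith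
    qed
  qed
  have lo: "?c t v \<ge> min (c0 v) (- B - d)" for t
  proof (induction t)
    case 0 then show ?case by simp
  next
    case (Suc t)
    show ?case
    proof (cases "?c t v < - B")
      case True
      have "{w \<in> ?N. ?c t v > ?c t w} = {}"
        using B True by (auto simp: abs_le_iff) (smt (verit))
      hence "card {w \<in> ?N. ?c t v > ?c t w} = 0" by (simp only: card.empty)
      then show ?thesis using step[of t] Suc by linarith
    next
      case False
      then show ?thesis using step[of t] cA[of t] unfolding d_def by linarith
    qed
  qed
  have "bounded_vertex V E c0 v"
    unfolding bounded_vertex_def
    by (rule exI[of _ "min (c0 v) (- B - d)"], rule exI[of _ "max (c0 v) (B + d)"])
       (use up lo in \<open>auto intro: order_trans\<close>)
  with assms(3) show False by blast
qed

end
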